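(* Let $(F_n)_{n\ge 0}$ be the Fibonacci sequence with $F_0=0$, $F_1=1$, $F_n=F_{n-1}+F_{n-2}$, and let $b_n=\dfrac{F_{7n}}{13}$ for $n\ge 0$. For every integer $m\ge 0$, $$[\underbrace{29,29,\dots,29}_{m+1}]=\frac{b_{m+2}}{b_{m+1}},$$ where the continued fraction has $m+1$ entries all equal to $29$.
   Context: For numbers $a_0,a_1,\dots,a_m$, the finite simple continued fraction $[a_0,a_1,\dots,a_m]$ denotes $a_0+\cfrac{1}{a_1+\cfrac{1}{\ddots+\cfrac{1}{a_m}}}$, evaluated as a rational number; $[a_0]=a_0$. *)

theory Defs
  imports Complex_Main "HOL-Number_Theory.Fib"
begin

text \<open>Finite simple continued fraction [a0, a1, ..., am] evaluated in the rationals.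
  The empty list is not a valid continued fraction; it is given value 0 only for totality.\<close>
fun cfrac :: "rat list \<Rightarrow> rat" where
  "cfrac [] = 0"
| "cfrac [a] = a"
| "cfrac (a # b # rest) = a + 1 / cfrac (b # rest)"

definition bseq :: "nat \<Rightarrow> rat" where
  "bseq n = of_nat (fib (7 * n)) / 13"

end

theory Submission
  imports Defs
begin

lemma fibv: "fib 7 = 13" "fib 14 = 377" "fib 8 = 21" "fib 15 = 610"
  by (simp_all add: fib_add[of 7 7, simplified] fib_add[of 7 1, simplified] fib_add[of 7 8, simplified] fib_add[of 4 3, simplified] eval_nat_numeral)

lemma fib14: "fib (n + 14) = 29 * fib (n + 7) + fib n"
proof (induction n rule: fib.induct)
  case 1 show ?case using fibv by simp
next
  case 2
  have "fib (Suc 0 + 14) = fib 15" "fib (Suc 0 + 7) = fib 8" by simp_all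
  then show ?case using fibv by simp
next
  case (3 n)
  have a: "fib (Suc (Suc n) + 14) = fib (n + 14) + fib (Suc n + 14)"
  proof -
    have "Suc (Suc n) + 14 = Suc (Suc (n + 14))" by simp
    then show ?thesis by (simp only: fib.simps) simp
  qed
  have b: "fib (Suc (Suc n) + 7) = fib (n + 7) + fib (Suc n + 7)"
  proof -
    have "Suc (Suc n) + 7 = Suc (Suc (n + 7))" by simp
    then show ?thesis by (simp only: fib.simps) simp
  qed
  show ?case using 3 a b by (simp add: algebra_simps)
qed

lemma fibpos: "fib (7 * m + 7) > 0"
  by (simp add: fib_neq_0_nat)

lemma main: "cfrac (replicate (m + 1) 29) = of_nat (fib (7 * m + 14)) / of_nat (fib (7 * m + 7))"
proof (induction m)
  case 0 show ?case using fibv by simp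
next
  case (Suc m)
  have c: "cfrac (29 # replicate (m + 1) 29) = 29 + 1 / cfrac (replicate (m+1) 29)"
    by simp
  have e1: "7 * Suc m + 14 = (7*m+7) + 14" and e2: "7 * Suc m + 7 = 7*m+14" by simp_all
  have p1: "(of_nat (fib (7 * m + 7)) :: rat) > 0" using fibpos by simp
  have p2: "(of_nat (fib (7 * m + 14)) :: rat) > 0" using fibpos[of "Suc m"] by (simp add: add.commute)
  have f: "(of_nat (fib (7 * m + 7 + 14)) :: rat) = 29 * of_nat (fib (7*m+14)) + of_nat (fib (7*m+7))"
    using fib14[of "7*m+7"] by (simp add: add.assoc)
  have "cfrac (replicate (Suc m + 1) 29) = cfrac (29 # replicate (m + 1) 29)" by simp
  also have "\<dots> = 29 + 1 / cfrac (replicate (m+1) 29)" by (rule c)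
  also have "\<dots> = of_nat (fib (7 * Suc m + 14)) / of_nat (fib (7 * Suc m + 7))"
    unfolding Suc e1 e2 f using p1 p2 by (simp add: field_simps)
  finally show ?case .
qed

theorem theorem8:
  fixes m :: nat
  shows "cfrac (replicate (m + 1) 29) = bseq (m + 2) / bseq (m + 1)"
proof -
  have "7 * (m + 2) = 7 * m + 14" "7 * (m+1) = 7*m+7" by simp_all
  then show ?thesis unfolding main bseq_def by (simp add: add.commute)
qed

end
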